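(* Let $p=0$, $\alpha\in[0,1]$, $0\le h_1<\dots<h_N\le1$, and nonnegative weights $f_0^S(h_j),f_0^{NS}(h_j)$, $j=1,\dots,N$, each summing to $1$; set $f_0(h_j)=\alpha f_0^S(h_j)+(1-\alpha)f_0^{NS}(h_j)$ and assume $f_0(h_N)>0$; write $f_0([h_i,1])=\sum_{j\ge i}f_0(h_j)$, $f_0^S([h_i,1])=\sum_{j\ge i}f_0^S(h_j)$, $f_0^{NS}([h_i,1])=\sum_{j\ge i}f_0^{NS}(h_j)$. Let $m_0^{S,j}\in[-1,1]$ be given. Let $f^{NS,1},\dots,f^{NS,N}\in C([0,+\infty),P([-1,1]))$ (weak topology) with initial data $f_0^{NS,i}$, write $m^{NS,j}(t)=\int_{-1}^1w\,f^{NS,j}(t,dw)$, $$\beta_i(t)=\alpha\sum_{j\ge i}f_0^S(h_j)m_0^{S,j}+(1-\alpha)\sum_{j\ge i}f_0^{NS}(h_j)m^{NS,j}(t),$$ and assume that for all $i$, $t\ge0$ and $\phi\in C^1([-1,1])$, $$\int\phi\,df^{NS,i}(t)=\int\phi\,df_0^{NS,i}+\int_0^t\!\!\int_{-1}^1\phi'(w)\big(\beta_i(s)-f_0([h_i,1])w\big)f^{NS,i}(s,dw)\,ds.$$ Define $$m_\infty^{NS,N}=\begin{cases}\int_{-1}^1w\,f_0^{NS,N}(dw)&\text{if }\alpha f_0^S(h_N)=0,\\ m_0^{S,N}&\text{if }\alpha f_0^S(h_N)>0,\end{cases}$$ and recursively for $i=N-1,\dots,1$, $$m_\infty^{NS,i}=\frac{(1-\alpha)\sum_{j\ge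 i+1}f_0^{NS}(h_j)m_\infty^{NS,j}+\alpha\sum_{j\ge i}f_0^S(h_j)m_0^{S,j}}{\alpha f_0^S([h_i,1])+(1-\alpha)f_0^{NS}([h_{i+1},1])}.$$ Then $f^{NS,i}(t)\to\delta_{m_\infty^{NS,i}}$ weakly as $t\to+\infty$ for every $i=1,\dots,N$. In particular, if $\alpha f_0^S(h_i)=0$ for all $i=1,\dots,N-1$ (no stubborn individuals at levels $h_1,\dots,h_{N-1}$), then $m_\infty^{NS,i}=m_\infty^{NS,N}$ for $i=1,\dots,N-1$.
   Context: $P([-1,1])$ is the set of Borel probability measures on $[-1,1]$; $\delta_x$ is the Dirac mass at $x$. Interpretation: $f^{NS,i}(t)$ is the opinion distribution of non-stubborn individuals at hierarchy level $h_i$, $\alpha f_0^S(h_j)$ (resp. $(1-\alpha)f_0^{NS}(h_j)$) the proportion of stubborn (resp. non-stubborn) individuals at level $h_j$, $m_0^{S,j}$ the mean opinion of stubborn individuals at level $h_j$. The case $p=0$ means hierarchy is strictly respected. *)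

theory Defs
  imports "HOL-Probability.Probability"
begin

text \<open>Parameters: N, alpha, the weights
  fS j = f_0^S(h_j), fNS j = f_0^NS(h_j), the stubborn means mS j = m_0^{S,j},
  and mN0 = the mean of the initial non-stubborn distribution at level N.\<close>

function minf_NS :: "nat \<Rightarrow> real \<Rightarrow> (nat \<Rightarrow> real) \<Rightarrow> (nat \<Rightarrow> real) \<Rightarrow> (nat \<Rightarrow> real)
    \<Rightarrow> real \<Rightarrow> nat \<Rightarrow> real" where
  "minf_NS N \<alpha> fS fNS mS mN0 i =
     (if N \<le> i then (if \<alpha> * fS N = 0 then mN0 else mS N)
      else ((1 - \<alpha>) * (\<Sum>j\<in>{i+1..N}. fNS j * minf_NS N \<alpha> fS fNS mS mN0 j)
              + \<alpha> * (\<Sum>j\<in>{i..N}. fS j * mS j))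
           / (\<alpha> * (\<Sum>j\<in>{i..N}. fS j) + (1 - \<alpha>) * (\<Sum>j\<in>{i+1..N}. fNS j)))"
  by pat_completeness auto
termination
  by (relation "Wellfounded.measure (\<lambda>(N, \<alpha>, fS, fNS, mS, mN0, i). N - i)") auto

end

theory Submission
  imports Defs "HOL-Real_Asymp.Real_Asymp"
begin


lemma exp_decay: "(c::real) > 0 \<Longrightarrow> ((\<lambda>t. K * exp (-c*t)) \<longlongrightarrow> 0) at_top"
  by real_asymp

lemma ode_conv:
  fixes y g :: "real \<Rightarrow> real" and c L :: real
  assumes c: "c > 0" and d: "\<And>t. t > 0 \<Longrightarrow> (y has_real_derivative (g t - c * y t)) (at t)"
   and lim: "(g \<longlongrightarrow> c * L) at_top"
  shows "(y \<longlongrightarrow> L) at_top"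
proof (rule tendstoI)
  fix e :: real assume e: "e > 0"
  have "c*e/2 > 0" using c e by simp
  from tendstoD[OF lim this] obtain T0 where T0: "\<And>t. t \<ge> T0 \<Longrightarrow> \<bar>g t - c*L\<bar> < c*e/2"
    by (auto simp: eventually_at_top_linorder dist_real_def)
  define T where "T = max T0 1"
  define z where "z t = exp (c*t) * (y t - L)" for t
  have dz: "(z has_real_derivative exp (c*t) * (g t - c*L)) (at t)" if "t>0" for t
    unfolding z_def
    by (rule derivative_eq_intros refl d[OF that])+ (simp add: algebra_simps)
  have up: "z t - z T \<le> e/2 * exp (c*t)" if "t \<ge> T" for t
  proof -
    define u where "u s = z s - e/2 * exp (c * s)" for s
    have "u t \<le> u T"
    proof (rule DERIV_nonpos_imp_nonincreasing[OF that])
      fix x assume x: "T \<le> x" "x \<le> t"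
      hence "x > 0" "x \<ge> T0" unfolding T_def by auto
      have "(u has_real_derivative
              exp (c*x) * (g x - c*L) - e/2 * (exp (c*x) * c)) (at x)"
        unfolding u_def by (rule derivative_eq_intros refl dz[OF \<open>x>0\<close>])+ simp
      moreover have "exp (c*x) * (g x - c*L) - e/2 * (exp (c*x) * c) \<le> 0"
      proof -
        have "exp (c*x) * (g x - c*L) \<le> exp (c*x) * (c*e/2)"
          using T0[OF \<open>x \<ge> T0\<close>] by (intro mult_left_mono) (linarith, simp)
        thus ?thesis by (simp add: algebra_simps)
      qed
      ultimately show "\<exists>y. (u has_real_derivative y) (at x) \<and> y \<le> 0" by blast
    qed
    thus ?thesis unfolding u_def using mult_pos_pos[OF e exp_gt_zero[of "c*T"]] mult_pos_pos[OF e exp_gt_zero[of "c*t"]] by linarith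
  qed
  have lo: "z T - z t \<le> e/2 * exp (c*t)" if "t \<ge> T" for t
  proof -
    define u where "u s = z s + e/2 * exp (c * s)" for s
    have "u T \<le> u t"
    proof (rule DERIV_nonneg_imp_nondecreasing[OF that])
      fix x assume x: "T \<le> x" "x \<le> t"
      hence "x > 0" "x \<ge> T0" unfolding T_def by auto
      have "(u has_real_derivative
              exp (c*x) * (g x - c*L) + e/2 * (exp (c*x) * c)) (at x)"
        unfolding u_def by (rule derivative_eq_intros refl dz[OF \<open>x>0\<close>])+ simp
      moreover have "exp (c*x) * (g x - c*L) + e/2 * (exp (c*x) * c) \<ge> 0"
      proof -
        have "exp (c*x) * (-(c*e/2)) \<le> exp (c*x) * (g x - c*L)"
          using T0[OF \<open>x \<ge> T0\<close>] by (intro mult_left_mono) (linarith, simp)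
        thus ?thesis by (simp add: algebra_simps)
      qed
      ultimately show "\<exists>y. (u has_real_derivative y) (at x) \<and> y \<ge> 0" by blast
    qed
    thus ?thesis unfolding u_def using mult_pos_pos[OF e exp_gt_zero[of "c*T"]] mult_pos_pos[OF e exp_gt_zero[of "c*t"]] by linarith
  qed
  have ev1: "eventually (\<lambda>t. \<bar>z T\<bar> * exp (-c*t) < e/2) at_top"
    using tendstoD[OF exp_decay[OF c, of "\<bar>z T\<bar>"], of "e/2"] e by (simp add: dist_real_def)
  have ev2: "eventually (\<lambda>t. t \<ge> T) at_top" by (rule eventually_ge_at_top)
  show "eventually (\<lambda>t. dist (y t) L < e) at_top"
    using ev1 ev2
  proof eventually_elim
    case (elim t)
    have "\<bar>z t\<bar> \<le> \<bar>z T\<bar> + e/2 * exp (c*t)" using up[OF elim(2)] lo[OF elim(2)] by linarith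
    hence "\<bar>z t\<bar> * exp (-c*t) \<le> (\<bar>z T\<bar> + e/2 * exp (c*t)) * exp (-c*t)"
      by (intro mult_right_mono) auto
    also have "\<dots> = \<bar>z T\<bar> * exp (-c*t) + e/2"
      by (simp add: algebra_simps exp_minus_inverse)
    also have "\<bar>z t\<bar> * exp (-c*t) = \<bar>y t - L\<bar>"
      unfolding z_def by (simp add: abs_mult exp_minus_inverse)
    finally show ?case using elim(1) by (simp add: dist_real_def)
  qed
qed

lemma pm_AE:
  assumes "prob_space M" "sets M = sets borel" "emeasure M {-1..1::real} = 1"
  shows "AE w in M. w \<in> {-1..1}"
proof -
  interpret prob_space M by fact
  have "prob {-1..1} = 1" using assms(3) by (simp add: measure_def)
  thus ?thesis by (rule AE_prob_1)
qed

lemma pm_int: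
  assumes "prob_space M" "sets M = sets borel" "emeasure M {-1..1::real} = 1"
    and "continuous_on UNIV \<phi>"
  shows "integrable M (\<phi> :: real \<Rightarrow> real)"
proof -
  interpret prob_space M by fact
  have "compact (\<phi> ` {-1..1})"
    by (rule compact_continuous_image[OF continuous_on_subset[OF assms(4)]]) auto
  then obtain B where B: "\<And>x. x \<in> \<phi> ` {-1..1} \<Longrightarrow> norm x \<le> B"
    using compact_imp_bounded bounded_iff by metis
  have meas: "\<phi> \<in> borel_measurable M"
    by (subst measurable_cong_sets[OF assms(2) refl]) (rule borel_measurable_continuous_onI[OF assms(4)])
  show ?thesis
  proof (rule integrable_const_bound[OF _ meas])
    show "AE x in M. norm (\<phi> x) \<le> B"
      using pm_AE[OF assms(1-3)] by eventually_elim (use B in auto)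
  qed
qed

lemma pm_const:
  assumes "prob_space M"
  shows "(\<integral>w. c \<partial>M) = (c::real)"
  using prob_space.prob_space[OF assms] by simp

lemma deriv_int:
  fixes y G :: "real \<Rightarrow> real"
  assumes G: "continuous_on {0..} G" and eq: "\<And>t. t \<ge> 0 \<Longrightarrow> y t = y 0 + integral {0..t} G"
    and t: "t > 0"
  shows "(y has_real_derivative G t) (at t)"
proof -
  have "((\<lambda>x. integral {0..x} G) has_real_derivative G t) (at t within {0..t+1})"
    by (rule integral_has_real_derivative) (use continuous_on_subset[OF G] t in auto)
  hence d1: "((\<lambda>x. integral {0..x} G) has_real_derivative G t) (at t)"
    using at_within_Icc_at[of 0 t "t+1"] t by simp
  hence "((\<lambda>x. y 0 + integral {0..x} G) has_real_derivative G t) (at t)"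
    using DERIV_add[OF DERIV_const[of "y 0" "at t"] d1] by simp
  thus ?thesis
  proof (rule has_field_derivative_transform_within_open[where S="{0<..}"])
    fix x :: real assume "x \<in> {0<..}"
    thus "y 0 + integral {0..x} G = y x" using eq[of x] by simp
  qed (use t in auto)
qed


declare minf_NS.simps[simp del]


theorem theorem4p4:
  fixes N :: nat and \<alpha> :: real and h fS fNS mS :: "nat \<Rightarrow> real"
    and f :: "nat \<Rightarrow> real \<Rightarrow> real measure"
  assumes N_pos: "N \<ge> 1"
    and alpha: "0 \<le> \<alpha>" "\<alpha> \<le> 1"
    and h_mono: "strict_mono_on {1..N} h" and h_range: "0 \<le> h 1" "h N \<le> 1"
    and fS_nonneg: "\<And>j. j \<in> {1..N} \<Longrightarrow> fS j \<ge> 0"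
    and fNS_nonneg: "\<And>j. j \<in> {1..N} \<Longrightarrow> fNS j \<ge> 0"
    and fS_sum: "(\<Sum>j\<in>{1..N}. fS j) = 1"
    and fNS_sum: "(\<Sum>j\<in>{1..N}. fNS j) = 1"
    and f0_top: "\<alpha> * fS N + (1 - \<alpha>) * fNS N > 0"
    and mS_range: "\<And>j. j \<in> {1..N} \<Longrightarrow> mS j \<in> {-1..1}"
    and f_prob: "\<And>i t. i \<in> {1..N} \<Longrightarrow> t \<ge> 0 \<Longrightarrow> prob_space (f i t)"
    and f_sets: "\<And>i t. i \<in> {1..N} \<Longrightarrow> t \<ge> 0 \<Longrightarrow> sets (f i t) = sets borel"
    and f_supp: "\<And>i t. i \<in> {1..N} \<Longrightarrow> t \<ge> 0 \<Longrightarrow> emeasure (f i t) {-1..1} = 1"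
    and f_cont: "\<And>i (\<phi>::real \<Rightarrow> real). i \<in> {1..N} \<Longrightarrow> continuous_on UNIV \<phi> \<Longrightarrow>
                   continuous_on {0..} (\<lambda>t. \<integral>w. \<phi> w \<partial>(f i t))"
    and f_eq: "\<And>i t \<phi> \<phi>'. i \<in> {1..N} \<Longrightarrow> t \<ge> 0 \<Longrightarrow>
                 (\<And>w. (\<phi> has_real_derivative \<phi>' w) (at w)) \<Longrightarrow> continuous_on UNIV \<phi>' \<Longrightarrow>
                 (\<integral>w. \<phi> w \<partial>(f i t)) =
                   (\<integral>w. \<phi> w \<partial>(f i 0)) +
                   integral {0..t} (\<lambda>s. \<integral>w. \<phi>' w *
                      ((\<alpha> * (\<Sum>j\<in>{i..N}. fS j * mS j)
                         + (1 - \<alpha>) * (\<Sum>j\<in>{i..N}. fNS j * (\<integral>v. v \<partial>(f j s))))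
                       - (\<Sum>j\<in>{i..N}. \<alpha> * fS j + (1 - \<alpha>) * fNS j) * w) \<partial>(f i s))"
  shows "(\<forall>i\<in>{1..N}. \<forall>\<phi>::real \<Rightarrow> real. continuous_on UNIV \<phi> \<longrightarrow>
            ((\<lambda>t. \<integral>w. \<phi> w \<partial>(f i t)) \<longlongrightarrow>
              (\<integral>w. \<phi> w \<partial>(return borel
                 (minf_NS N \<alpha> fS fNS mS (\<integral>v. v \<partial>(f N 0)) i)))) at_top)
       \<and> ((\<forall>i\<in>{1..<N}. \<alpha> * fS i = 0) \<longrightarrow>
            (\<forall>i\<in>{1..<N}. minf_NS N \<alpha> fS fNS mS (\<integral>v. v \<partial>(f N 0)) i
                        = minf_NS N \<alpha> fS fNS mS (\<integral>v. v \<partial>(f N 0)) N))"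
  
proof -
  define Mo where "Mo i t = (\<integral>v. v \<partial>(f i t))" for i t
  define mi where "mi i = minf_NS N \<alpha> fS fNS mS (Mo N 0) i" for i
  define bet where "bet i t = \<alpha> * (\<Sum>j\<in>{i..N}. fS j * mS j) + (1 - \<alpha>) * (\<Sum>j\<in>{i..N}. fNS j * Mo j t)" for i t
  define A where "A i = (\<Sum>j\<in>{i..N}. \<alpha> * fS j + (1 - \<alpha>) * fNS j)" for i
  have PS: "prob_space (f i t)" "sets (f i t) = sets borel" "emeasure (f i t) {-1..1} = 1"
    if "i\<in>{1..N}" "t\<ge>0" for i t using f_prob f_sets f_supp that by auto
  have INT: "integrable (f i t) \<phi>" if "i\<in>{1..N}" "t\<ge>0" "continuous_on UNIV \<phi>" for i t and \<phi> :: "real \<Rightarrow> real"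
    using pm_int[OF PS[OF that(1,2)] that(3)] .
  have nnS: "\<alpha> * fS j \<ge> 0" if "j \<in> {1..N}" for j using alpha fS_nonneg[OF that] by simp
  have nnNS: "(1 - \<alpha>) * fNS j \<ge> 0" if "j \<in> {1..N}" for j using alpha fNS_nonneg[OF that] by simp
  have Mo_cont: "continuous_on {0..} (Mo i)" if "i\<in>{1..N}" for i
    using f_cont[OF that, of "\<lambda>w. w"] unfolding Mo_def by (simp add: continuous_on_id)
  have bet_cont: "continuous_on {0..} (bet i)" if "i\<in>{1..N}" for i
    unfolding bet_def
    by (intro continuous_intros continuous_on_sum Mo_cont) (use that in auto)
  have A_pos: "A i > 0" if "i\<in>{1..N}" for i
  proof -
    have "\<alpha> * fS N + (1 - \<alpha>) * fNS N \<le> A i" unfolding A_def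
      by (rule member_le_sum[where f="\<lambda>j. \<alpha> * fS j + (1 - \<alpha>) * fNS j"])
         (use that nnS nnNS in auto)
    thus ?thesis using f0_top by linarith
  qed
  have c_pos: "\<alpha> * (\<Sum>j\<in>{i..N}. fS j) + (1 - \<alpha>) * (\<Sum>j\<in>{i+1..N}. fNS j) > 0"
    if "1 \<le> i" "i < N" for i
  proof -
    have "\<alpha> * fS N \<le> (\<Sum>j\<in>{i..N}. \<alpha> * fS j)"
      by (rule member_le_sum[where f="\<lambda>j. \<alpha> * fS j"]) (use that nnS in auto)
    moreover have "(1 - \<alpha>) * fNS N \<le> (\<Sum>j\<in>{i+1..N}. (1 - \<alpha>) * fNS j)"
      by (rule member_le_sum[where f="\<lambda>j. (1 - \<alpha>) * fNS j"]) (use that nnNS in auto)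
    ultimately show ?thesis using f0_top by (simp add: sum_distrib_left)
  qed
  have Mo_eq: "Mo i t = Mo i 0 + integral {0..t} (\<lambda>s. bet i s - A i * Mo i s)"
    if "i\<in>{1..N}" "t\<ge>0" for i t
  proof -
    have "Mo i t = Mo i 0 + integral {0..t} (\<lambda>s. \<integral>w. 1 * (bet i s - A i * w) \<partial>(f i s))"
      unfolding Mo_def bet_def A_def
      by (rule f_eq[OF that, where \<phi>="\<lambda>w. w" and \<phi>'="\<lambda>w. 1"]) auto
    also have "integral {0..t} (\<lambda>s. \<integral>w. 1 * (bet i s - A i * w) \<partial>(f i s))
        = integral {0..t} (\<lambda>s. bet i s - A i * Mo i s)"
    proof (rule integral_cong)
      fix s assume "s \<in> {0..t}"
      hence s: "s \<ge> 0" by simp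
      have "(\<integral>w. 1 * (bet i s - A i * w) \<partial>(f i s)) = (\<integral>w. bet i s - A i * w \<partial>(f i s))" by simp
      also have "\<dots> = (\<integral>w. bet i s \<partial>(f i s)) - (\<integral>w. A i * w \<partial>(f i s))"
        by (rule Bochner_Integration.integral_diff) (rule INT[OF that(1) s], intro continuous_intros)+
      also have "\<dots> = bet i s - A i * Mo i s"
        using pm_const[OF PS(1)[OF that(1) s]] by (simp add: Mo_def)
      finally show "(\<integral>w. 1 * (bet i s - A i * w) \<partial>(f i s)) = bet i s - A i * Mo i s" .
    qed
    finally show ?thesis .
  qed
  have Mo_der: "(Mo i has_real_derivative bet i t - A i * Mo i t) (at t)" if "i\<in>{1..N}" "t>0" for i t
  proof (rule deriv_int[where y="Mo i" and G="\<lambda>s. bet i s - A i * Mo i s"])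
    show "continuous_on {0..} (\<lambda>s. bet i s - A i * Mo i s)"
      by (intro continuous_on_diff continuous_on_mult continuous_on_const bet_cont Mo_cont that(1))
    show "Mo i s = Mo i 0 + integral {0..s} (\<lambda>s. bet i s - A i * Mo i s)" if "s \<ge> 0" for s
      by (rule Mo_eq[OF \<open>i \<in> {1..N}\<close> that])
  qed (rule that(2))
  have BI: "P i" if "1 \<le> i" "i \<le> N" "\<And>i. 1 \<le> i \<Longrightarrow> i \<le> N \<Longrightarrow> (\<And>j. i < j \<Longrightarrow> j \<le> N \<Longrightarrow> P j) \<Longrightarrow> P i"
    for P i using that(1,2)
  proof (induction "N - i" arbitrary: i rule: less_induct)
    case less
    show ?case by (rule that(3)) (use less in auto)
  qed
  have conv: "(Mo i \<longlongrightarrow> mi i) at_top" if "i \<in> {1..N}" for i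
  proof -
    have i12: "1 \<le> i" "i \<le> N" using that by auto
    show ?thesis
    proof (rule BI[where P="\<lambda>i. (Mo i \<longlongrightarrow> mi i) at_top", OF i12])
      fix i assume H: "1 \<le> i" "i \<le> N" and IH: "\<And>j. i < j \<Longrightarrow> j \<le> N \<Longrightarrow> (Mo j \<longlongrightarrow> mi j) at_top"
      show "(Mo i \<longlongrightarrow> mi i) at_top"
      proof (cases "i = N")
        case True
        have eqN: "bet N t - A N * Mo N t = \<alpha> * fS N * (mS N - Mo N t)" for t
          by (simp add: bet_def A_def algebra_simps)
        have N1: "N \<in> {1..N}" using N_pos by simp
        show ?thesis
        proof (cases "\<alpha> * fS N = 0")
          case z: True
          have cst: "Mo N t = Mo N 0" if "t \<ge> 0" for t
          proof -
            have "integral {0..t} (\<lambda>s. bet N s - A N * Mo N s) = integral {0..t} (\<lambda>s. 0)"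
              by (rule integral_cong) (simp add: eqN z)
            thus ?thesis by (subst Mo_eq[OF N1 that]) simp
          qed
          have "eventually (\<lambda>t. Mo N t = Mo N 0) at_top"
            by (rule eventually_mono[OF eventually_ge_at_top[of "0::real"]]) (rule cst)
          hence "(Mo N \<longlongrightarrow> Mo N 0) at_top" by (rule tendsto_eventually)
          moreover have "mi N = Mo N 0" unfolding mi_def by (subst minf_NS.simps) (use z in simp)
          ultimately show ?thesis using True by simp
        next
          case nz: False
          have cpos: "\<alpha> * fS N > 0" using nnS[OF N1] nz by linarith
          have "(Mo N \<longlongrightarrow> mS N) at_top"
          proof (rule ode_conv[OF cpos, where g="\<lambda>t. \<alpha> * fS N * mS N"])
            fix t :: real assume "t > 0"
            thus "(Mo N has_real_derivative \<alpha> * fS N * mS N - \<alpha> * fS N * Mo N t) (at t)"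
              using Mo_der[OF N1, of t] eqN[of t] by (simp add: algebra_simps)
          qed simp
          moreover have "mi N = mS N" unfolding mi_def by (subst minf_NS.simps) (use nz in simp)
          ultimately show ?thesis using True by simp
        qed
      next
        case False
        hence iN: "i < N" using H by simp
        have i1: "i \<in> {1..N}" using H by simp
        define c where "c = \<alpha> * (\<Sum>j\<in>{i..N}. fS j) + (1 - \<alpha>) * (\<Sum>j\<in>{i+1..N}. fNS j)"
        define g where "g t = \<alpha> * (\<Sum>j\<in>{i..N}. fS j * mS j) + (1 - \<alpha>) * (\<Sum>j\<in>{i+1..N}. fNS j * Mo j t)" for t
        define num where "num = \<alpha> * (\<Sum>j\<in>{i..N}. fS j * mS j) + (1 - \<alpha>) * (\<Sum>j\<in>{i+1..N}. fNS j * mi j)"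
        have cpos: "c > 0" unfolding c_def using c_pos H iN by simp
        have sp1: "(\<Sum>j\<in>{i..N}. fNS j) = fNS i + (\<Sum>j\<in>{i+1..N}. fNS j)"
          using iN by (simp add: sum.atLeast_Suc_atMost)
        have sp2: "(\<Sum>j\<in>{i..N}. fNS j * Mo j t) = fNS i * Mo i t + (\<Sum>j\<in>{i+1..N}. fNS j * Mo j t)" for t
          using iN by (simp add: sum.atLeast_Suc_atMost)
        have Ai: "A i = \<alpha> * (\<Sum>j\<in>{i..N}. fS j) + (1 - \<alpha>) * (\<Sum>j\<in>{i..N}. fNS j)"
          unfolding A_def by (simp add: sum.distrib sum_distrib_left)
        have eqi: "bet i t - A i * Mo i t = g t - c * Mo i t" for t
          unfolding bet_def Ai g_def c_def sp1 sp2 by (simp add: algebra_simps)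
        have "(g \<longlongrightarrow> num) at_top" unfolding g_def num_def
          by (intro tendsto_intros tendsto_sum IH) auto
        moreover have "mi i = num / c" unfolding mi_def num_def c_def
          by (subst minf_NS.simps) (use iN in simp)
        ultimately have glim: "(g \<longlongrightarrow> c * mi i) at_top" using cpos by simp
        show ?thesis
        proof (rule ode_conv[OF cpos _ glim])
          fix t :: real assume "t > 0"
          thus "(Mo i has_real_derivative g t - c * Mo i t) (at t)"
            using Mo_der[OF i1, of t] eqi[of t] by simp
        qed
      qed
    qed
  qed
  define Q where "Q i t = (\<integral>w. (w - mi i)\<^sup>2 \<partial>(f i t))" for i t
  have Q_cont: "continuous_on {0..} (Q i)" if "i\<in>{1..N}" for i
    using f_cont[OF that, of "\<lambda>w. (w - mi i)\<^sup>2"] unfolding Q_def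
    by (simp add: continuous_intros)
  have Qlim: "(Q i \<longlongrightarrow> 0) at_top" if i1: "i\<in>{1..N}" for i
  proof -
    define L where "L = mi i"
    define g where "g t = 2 * (bet i t - A i * L) * (Mo i t - L)" for t
    have dphi: "((\<lambda>w. (w - L)\<^sup>2) has_real_derivative 2 * (w - L)) (at w)" for w
      by (auto intro!: derivative_eq_intros)
    have Q_eq: "Q i t = Q i 0 + integral {0..t} (\<lambda>s. g s - 2 * A i * Q i s)" if t: "t \<ge> 0" for t
    proof -
      have "Q i t = Q i 0 + integral {0..t} (\<lambda>s. \<integral>w. 2 * (w - L) * (bet i s - A i * w) \<partial>(f i s))"
        unfolding Q_def bet_def A_def L_def Mo_def
        by (rule f_eq[OF i1 t, where \<phi>="\<lambda>w. (w - mi i)\<^sup>2" and \<phi>'="\<lambda>w. 2 * (w - mi i)"])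
           (use dphi[unfolded L_def] in \<open>auto intro!: continuous_intros\<close>)
      also have "integral {0..t} (\<lambda>s. \<integral>w. 2 * (w - L) * (bet i s - A i * w) \<partial>(f i s))
          = integral {0..t} (\<lambda>s. g s - 2 * A i * Q i s)"
      proof (rule integral_cong)
        fix s assume "s \<in> {0..t}"
        hence s: "s \<ge> 0" by simp
        define k1 where "k1 = 2 * (bet i s - A i * L)"
        have pt: "2 * (w - L) * (bet i s - A i * w) = (k1 * w - k1 * L) - 2 * A i * (w - L)\<^sup>2" for w
          unfolding k1_def by (simp add: algebra_simps power2_eq_square)
        have "(\<integral>w. 2 * (w - L) * (bet i s - A i * w) \<partial>(f i s))
            = (\<integral>w. (k1 * w - k1 * L) - 2 * A i * (w - L)\<^sup>2 \<partial>(f i s))" by (simp only: pt)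
        also have "\<dots> = (\<integral>w. k1 * w - k1 * L \<partial>(f i s)) - (\<integral>w. 2 * A i * (w - L)\<^sup>2 \<partial>(f i s))"
          by (rule Bochner_Integration.integral_diff) (rule INT[OF i1 s], intro continuous_intros)+
        also have "(\<integral>w. k1 * w - k1 * L \<partial>(f i s)) = (\<integral>w. k1 * w \<partial>(f i s)) - (\<integral>w. k1 * L \<partial>(f i s))"
          by (rule Bochner_Integration.integral_diff) (rule INT[OF i1 s], intro continuous_intros)+
        also have "\<dots> = k1 * Mo i s - k1 * L"
          using pm_const[OF PS(1)[OF i1 s]] by (simp add: Mo_def)
        also have "(\<integral>w. 2 * A i * (w - L)\<^sup>2 \<partial>(f i s)) = 2 * A i * Q i s"
          by (simp add: Q_def L_def)
        finally show "(\<integral>w. 2 * (w - L) * (bet i s - A i * w) \<partial>(f i s)) = g s - 2 * A i * Q i s"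
          unfolding g_def k1_def by (simp add: algebra_simps)
      qed
      finally show ?thesis .
    qed
    have cpos: "2 * A i > 0" using A_pos[OF i1] by simp
    have blim: "(bet i \<longlongrightarrow> \<alpha> * (\<Sum>j\<in>{i..N}. fS j * mS j) + (1 - \<alpha>) * (\<Sum>j\<in>{i..N}. fNS j * mi j)) at_top"
      unfolding bet_def by (intro tendsto_intros tendsto_sum conv) (use i1 in auto)
    have glim: "(g \<longlongrightarrow> 2 * A i * 0) at_top"
    proof -
      have "(g \<longlongrightarrow> 2 * ((\<alpha> * (\<Sum>j\<in>{i..N}. fS j * mS j) + (1 - \<alpha>) * (\<Sum>j\<in>{i..N}. fNS j * mi j)) - A i * L) * (L - L)) at_top"
        unfolding g_def L_def by (intro tendsto_intros blim conv i1)
      thus ?thesis by simp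
    qed
    show ?thesis
    proof (rule ode_conv[OF cpos _ glim])
      fix t :: real assume "t > 0"
      show "(Q i has_real_derivative g t - 2 * A i * Q i t) (at t)"
      proof (rule deriv_int[where y="Q i" and G="\<lambda>s. g s - 2 * A i * Q i s"])
        show "continuous_on {0..} (\<lambda>s. g s - 2 * A i * Q i s)" unfolding g_def
          by (intro continuous_on_diff continuous_on_mult continuous_on_const bet_cont Mo_cont Q_cont i1)
        show "Q i s = Q i 0 + integral {0..s} (\<lambda>s. g s - 2 * A i * Q i s)" if "s \<ge> 0" for s
          by (rule Q_eq[OF that])
      qed (rule \<open>t > 0\<close>)
    qed
  qed
  have weak: "((\<lambda>t. \<integral>w. \<phi> w \<partial>(f i t)) \<longlongrightarrow> (\<integral>w. \<phi> w \<partial>(return borel (mi i)))) at_top"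
    if i1: "i\<in>{1..N}" and phic: "continuous_on UNIV \<phi>" for i and \<phi> :: "real \<Rightarrow> real"
  proof -
    define L where "L = mi i"
    have ret: "(\<integral>w. \<phi> w \<partial>(return borel L)) = \<phi> L"
      by (rule integral_return) (auto intro: borel_measurable_continuous_onI[OF phic])
    show ?thesis unfolding ret[unfolded L_def]
    proof (rule tendstoI)
      fix e :: real assume e: "e > 0"
      have "\<exists>d>0. \<forall>w. dist w L < d \<longrightarrow> dist (\<phi> w) (\<phi> L) < e/2"
        using phic e unfolding continuous_on_iff
        by (metis UNIV_I half_gt_zero_iff)
      then obtain d where d: "d > 0" "\<And>w. dist w L < d \<Longrightarrow> dist (\<phi> w) (\<phi> L) < e/2" by blast
      have "compact (\<phi> ` {-1..1})"
        by (rule compact_continuous_image[OF continuous_on_subset[OF phic]]) auto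
      then obtain B where B0: "\<And>x. x \<in> \<phi> ` {-1..1} \<Longrightarrow> norm x \<le> B"
        using compact_imp_bounded bounded_iff by metis
      have B: "\<bar>\<phi> w\<bar> \<le> B" if "w \<in> {-1..1}" for w using B0[of "\<phi> w"] that by auto
      define K where "K = (B + \<bar>\<phi> L\<bar>) / d^2"
      have "0 \<le> B" using B[of 0] by simp
      hence K0: "K \<ge> 0" unfolding K_def by simp
      have pw: "\<bar>\<phi> w - \<phi> L\<bar> \<le> e/2 + K * (w - L)\<^sup>2" if w: "w \<in> {-1..1}" for w
      proof (cases "\<bar>w - L\<bar> < d")
        case True
        hence "\<bar>\<phi> w - \<phi> L\<bar> < e/2" using d(2)[of w] by (simp add: dist_real_def)
        moreover have "K * (w - L)\<^sup>2 \<ge> 0" using K0 by simp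
        ultimately show ?thesis by linarith
      next
        case False
        hence "d^2 \<le> \<bar>w - L\<bar>^2" using d(1) by (intro power_mono) auto
        hence "d^2 \<le> (w - L)\<^sup>2" by simp
        hence "K * d^2 \<le> K * (w - L)\<^sup>2" using K0 by (rule mult_left_mono)
        moreover have "K * d^2 = B + \<bar>\<phi> L\<bar>" unfolding K_def using d(1) by simp
        moreover have "\<bar>\<phi> w - \<phi> L\<bar> \<le> B + \<bar>\<phi> L\<bar>" using B[OF w] by linarith
        ultimately show ?thesis using e by linarith
      qed
      have "((\<lambda>t. K * Q i t) \<longlongrightarrow> K * 0) at_top" by (intro tendsto_intros Qlim i1)
      hence ev: "eventually (\<lambda>t. K * Q i t < e/2) at_top"
        using tendstoD[of "\<lambda>t. K * Q i t" 0 at_top "e/2"] e by (auto simp: dist_real_def elim: eventually_mono)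
      show "eventually (\<lambda>t. dist (\<integral>w. \<phi> w \<partial>(f i t)) (\<phi> (mi i)) < e) at_top"
        using ev eventually_ge_at_top[of "0::real"]
      proof eventually_elim
        case (elim t)
        note PSt = PS[OF i1 elim(2)]
        have "(\<integral>w. \<phi> w - \<phi> L \<partial>(f i t)) = (\<integral>w. \<phi> w \<partial>(f i t)) - (\<integral>w. \<phi> L \<partial>(f i t))"
          by (rule Bochner_Integration.integral_diff) (rule INT[OF i1 elim(2)], intro continuous_intros phic)+
        also have "(\<integral>w. \<phi> L \<partial>(f i t)) = \<phi> L" by (rule pm_const[OF PSt(1)])
        finally have eq1: "(\<integral>w. \<phi> w \<partial>(f i t)) - \<phi> L = (\<integral>w. \<phi> w - \<phi> L \<partial>(f i t))" by simp
        have "\<bar>\<integral>w. \<phi> w - \<phi> L \<partial>(f i t)\<bar> \<le> (\<integral>w. \<bar>\<phi> w - \<phi> L\<bar> \<partial>(f i t))"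
          by (rule integral_abs_bound)
        also have "\<dots> \<le> (\<integral>w. e/2 + K * (w - L)\<^sup>2 \<partial>(f i t))"
        proof (rule integral_mono_AE)
          show "integrable (f i t) (\<lambda>w. \<bar>\<phi> w - \<phi> L\<bar>)"
            by (rule INT[OF i1 elim(2)]) (intro continuous_intros phic)
          show "integrable (f i t) (\<lambda>w. e/2 + K * (w - L)\<^sup>2)"
            by (rule INT[OF i1 elim(2)]) (intro continuous_intros)
          show "AE w in f i t. \<bar>\<phi> w - \<phi> L\<bar> \<le> e/2 + K * (w - L)\<^sup>2"
            using pm_AE[OF PSt] by eventually_elim (rule pw)
        qed
        also have "(\<integral>w. e/2 + K * (w - L)\<^sup>2 \<partial>(f i t)) = (\<integral>w. e/2 \<partial>(f i t)) + (\<integral>w. K * (w - L)\<^sup>2 \<partial>(f i t))"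
          by (rule Bochner_Integration.integral_add) (rule INT[OF i1 elim(2)], intro continuous_intros)+
        also have "\<dots> = e/2 + K * Q i t"
          using pm_const[OF PSt(1)] by (simp add: Q_def L_def)
        finally have "\<bar>(\<integral>w. \<phi> w \<partial>(f i t)) - \<phi> L\<bar> \<le> e/2 + K * Q i t" using eq1 by simp
        thus ?case using elim(1) unfolding L_def by (simp add: dist_real_def)
      qed
    qed
  qed
  have P1: "\<forall>i\<in>{1..N}. \<forall>\<phi>::real \<Rightarrow> real. continuous_on UNIV \<phi> \<longrightarrow>
      ((\<lambda>t. \<integral>w. \<phi> w \<partial>(f i t)) \<longlongrightarrow> (\<integral>w. \<phi> w \<partial>(return borel (mi i)))) at_top"
    by (intro ballI allI impI weak)
  have P2: "(\<forall>i\<in>{1..<N}. \<alpha> * fS i = 0) \<longrightarrow> (\<forall>i\<in>{1..<N}. mi i = mi N)"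
  proof
    assume z: "\<forall>i\<in>{1..<N}. \<alpha> * fS i = 0"
    have ins: "{i..N} = insert N {i..<N}" if "i \<le> N" for i using that by auto
    have S1: "\<alpha> * (\<Sum>j\<in>{i..N}. fS j * mS j) = \<alpha> * fS N * mS N" if "1 \<le> i" "i \<le> N" for i
    proof -
      have "\<alpha> * (\<Sum>j\<in>{i..N}. fS j * mS j) = (\<Sum>j\<in>{i..N}. \<alpha> * fS j * mS j)"
        by (simp add: sum_distrib_left mult.assoc)
      also have "\<dots> = \<alpha> * fS N * mS N + (\<Sum>j\<in>{i..<N}. \<alpha> * fS j * mS j)"
        unfolding ins[OF that(2)] by (subst sum.insert) auto
      also have "(\<Sum>j\<in>{i..<N}. \<alpha> * fS j * mS j) = 0"
        by (rule sum.neutral) (use z that in auto)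
      finally show ?thesis by simp
    qed
    have S2: "\<alpha> * (\<Sum>j\<in>{i..N}. fS j) = \<alpha> * fS N" if "1 \<le> i" "i \<le> N" for i
    proof -
      have "\<alpha> * (\<Sum>j\<in>{i..N}. fS j) = (\<Sum>j\<in>{i..N}. \<alpha> * fS j)"
        by (simp add: sum_distrib_left)
      also have "\<dots> = \<alpha> * fS N + (\<Sum>j\<in>{i..<N}. \<alpha> * fS j)"
        unfolding ins[OF that(2)] by (subst sum.insert) auto
      also have "(\<Sum>j\<in>{i..<N}. \<alpha> * fS j) = 0"
        by (rule sum.neutral) (use z that in auto)
      finally show ?thesis by simp
    qed
    have key: "\<alpha> * fS N * mS N = \<alpha> * fS N * mi N"
    proof (cases "\<alpha> * fS N = 0")
      case False
      have "mi N = mS N" unfolding mi_def by (subst minf_NS.simps) (use False in simp)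
      thus ?thesis by simp
    qed simp
    have all: "mi i = mi N" if "1 \<le> i" "i \<le> N" for i
    proof (rule BI[where P="\<lambda>i. mi i = mi N", OF that])
      fix i assume H: "1 \<le> i" "i \<le> N" and IH: "\<And>j. i < j \<Longrightarrow> j \<le> N \<Longrightarrow> mi j = mi N"
      show "mi i = mi N"
      proof (cases "i = N")
        case False
        hence iN: "i < N" using H by simp
        define c where "c = \<alpha> * (\<Sum>j\<in>{i..N}. fS j) + (1 - \<alpha>) * (\<Sum>j\<in>{i+1..N}. fNS j)"
        have cpos: "c > 0" unfolding c_def using c_pos H iN by simp
        have "(\<Sum>j\<in>{i+1..N}. fNS j * mi j) = (\<Sum>j\<in>{i+1..N}. fNS j * mi N)"
        proof (rule sum.cong)
          fix j assume "j \<in> {i+1..N}"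
          hence "mi j = mi N" by (intro IH) auto
          thus "fNS j * mi j = fNS j * mi N" by simp
        qed simp
        also have "\<dots> = (\<Sum>j\<in>{i+1..N}. fNS j) * mi N" by (simp add: sum_distrib_right)
        finally have S3: "(\<Sum>j\<in>{i+1..N}. fNS j * mi j) = (\<Sum>j\<in>{i+1..N}. fNS j) * mi N" .
        have "mi i = ((1 - \<alpha>) * (\<Sum>j\<in>{i+1..N}. fNS j * mi j) + \<alpha> * (\<Sum>j\<in>{i..N}. fS j * mS j)) / c"
          unfolding mi_def c_def by (subst minf_NS.simps) (use iN in simp)
        also have "\<dots> = ((1 - \<alpha>) * (\<Sum>j\<in>{i+1..N}. fNS j) * mi N + \<alpha> * fS N * mi N) / c"
          unfolding S3 S1[OF H] key by simp
        also have "\<dots> = (c * mi N) / c"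
          unfolding c_def S2[OF H] by (simp add: algebra_simps)
        also have "\<dots> = mi N" using cpos by simp
        finally show ?thesis .
      qed simp
    qed
    show "\<forall>i\<in>{1..<N}. mi i = mi N"
    proof
      fix i assume "i \<in> {1..<N}"
      thus "mi i = mi N" by (intro all) auto
    qed
  qed
  show ?thesis using P1 P2 unfolding mi_def Mo_def by (rule conjI)
qed

end
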